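(* Consider the system $$\dot x=-y+x(x^3+xy^2)+\sum_{k=1}^2\varepsilon^k\Big(\lambda_kx+\sum_{i+j=4}a_{k,i,j}x^iy^j\Big),\qquad \dot y=x+y(x^3+xy^2)+\sum_{k=1}^2\varepsilon^k\Big(\lambda_ky+\sum_{i+j=4}b_{k,i,j}x^iy^j\Big)$$ with real coefficients. Then the unperturbed equation is $dr/d\theta=r^4\cos\theta$, with solution $r(\theta,z)=z(1-3z^3\sin\theta)^{-1/3}$ for $r(0)=z$, periodic and positive for $z\in D=(0,3^{-1/3})$, and the first order averaged function $f_1$, after the substitution $z=\big[\frac{1-s^2}{3(1+s^2)}\big]^{1/3}$ with $s\in(0,1)$ (a bijection onto $D$), equals $$\frac{\pi\,3^{2/3}(1-s)^{1/3}}{108(1+s)^{11/3}(1+s^2)^{4/3}}\big(N_1s^6+N_2s^5+N_3s^4+N_4s^3+N_3s^2+N_2s+N_1\big),$$ where $N_1=3a_{1,1,3}+a_{1,3,1}-3b_{1,0,4}-b_{1,2,2}-3b_{1,4,0}+72\lambda_1$, $N_2=-4a_{1,1,3}+4b_{1,0,4}+4a_{1,3,1}-4b_{1,2,2}-12b_{1,4,0}+288\lambda_1$, $N_3=5a_{1,1,3}-9a_{1,3,1}-5b_{1,0,4}+9b_{1,2,2}-5b_{1,4,0}+504\lambda_1$, $N_4=-8a_{1,1,3}+8a_{1,3,1}+8b_{1,0,4}-8b_{1,2,2}+40b_{1,4,0}+576\lambda_1$.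
   Context: Averaging framework (first order): in polar coordinates $x=r\cos\theta,y=r\sin\theta$, write $dr/d\theta=F_0(\theta,r)+\varepsilon F_1(\theta,r)+\varepsilon^2F_2(\theta,r)+O(\varepsilon^3)$; let $r(\theta,z)$ solve $dr/d\theta=F_0$ with $r(0,z)=z$ and $Y(\theta,z)$ solve $Y'=\partial_rF_0(\theta,r(\theta,z))Y$, $Y(0,z)=1$ (here $Y=(1-3z^3\sin\theta)^{-4/3}$). The first order averaged function is $f_1(z)=Y(2\pi,z)\int_0^{2\pi}Y(s,z)^{-1}F_1(s,r(s,z))\,ds$. *)

theory Defs
  imports "HOL-Analysis.Analysis"
begin

definition Pfield :: "(nat \<Rightarrow> nat \<Rightarrow> nat \<Rightarrow> real) \<Rightarrow> (nat \<Rightarrow> nat \<Rightarrow> nat \<Rightarrow> real) \<Rightarrow> (nat \<Rightarrow> real)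
    \<Rightarrow> real \<Rightarrow> real \<Rightarrow> real \<Rightarrow> real" where
  "Pfield a b lam eps x y = - y + x * (x^3 + x * y^2)
     + (\<Sum>k\<in>{1..2::nat}. eps^k * (lam k * x + (\<Sum>i\<le>4. a k i (4 - i) * x^i * y^(4 - i))))"

definition Qfield :: "(nat \<Rightarrow> nat \<Rightarrow> nat \<Rightarrow> real) \<Rightarrow> (nat \<Rightarrow> nat \<Rightarrow> nat \<Rightarrow> real) \<Rightarrow> (nat \<Rightarrow> real)
    \<Rightarrow> real \<Rightarrow> real \<Rightarrow> real \<Rightarrow> real" where
  "Qfield a b lam eps x y = x + y * (x^3 + x * y^2)
     + (\<Sum>k\<in>{1..2::nat}. eps^k * (lam k * y + (\<Sum>i\<le>4. b k i (4 - i) * x^i * y^(4 - i))))"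

definition drdtheta :: "(nat \<Rightarrow> nat \<Rightarrow> nat \<Rightarrow> real) \<Rightarrow> (nat \<Rightarrow> nat \<Rightarrow> nat \<Rightarrow> real) \<Rightarrow> (nat \<Rightarrow> real)
    \<Rightarrow> real \<Rightarrow> real \<Rightarrow> real \<Rightarrow> real" where
  "drdtheta a b lam eps \<theta> r =
     (let x = r * cos \<theta>; y = r * sin \<theta>;
          P = Pfield a b lam eps x y; Q = Qfield a b lam eps x y
      in ((x * P + y * Q) / r) / ((x * Q - y * P) / r^2))"

definition F0 :: "(nat \<Rightarrow> nat \<Rightarrow> nat \<Rightarrow> real) \<Rightarrow> (nat \<Rightarrow> nat \<Rightarrow> nat \<Rightarrow> real) \<Rightarrow> (nat \<Rightarrow> real)
    \<Rightarrow> real \<Rightarrow> real \<Rightarrow> real" where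
  "F0 a b lam \<theta> r = drdtheta a b lam 0 \<theta> r"

definition F1 :: "(nat \<Rightarrow> nat \<Rightarrow> nat \<Rightarrow> real) \<Rightarrow> (nat \<Rightarrow> nat \<Rightarrow> nat \<Rightarrow> real) \<Rightarrow> (nat \<Rightarrow> real)
    \<Rightarrow> real \<Rightarrow> real \<Rightarrow> real" where
  "F1 a b lam \<theta> r = deriv (\<lambda>eps. drdtheta a b lam eps \<theta> r) 0"

definition Dom :: "real set" where
  "Dom = {0<..<3 powr (-1/3)}"

definition rsol :: "real \<Rightarrow> real \<Rightarrow> real" where
  "rsol z \<theta> = z * (1 - 3 * z^3 * sin \<theta>) powr (-1/3)"

definition Ysol :: "real \<Rightarrow> real \<Rightarrow> real" where
  "Ysol z \<theta> = (1 - 3 * z^3 * sin \<theta>) powr (-4/3)"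

definition f1 :: "(nat \<Rightarrow> nat \<Rightarrow> nat \<Rightarrow> real) \<Rightarrow> (nat \<Rightarrow> nat \<Rightarrow> nat \<Rightarrow> real) \<Rightarrow> (nat \<Rightarrow> real)
    \<Rightarrow> real \<Rightarrow> real" where
  "f1 a b lam z = Ysol z (2*pi) *
     integral {0..2*pi} (\<lambda>s. F1 a b lam s (rsol z s) / Ysol z s)"

definition zsub :: "real \<Rightarrow> real" where
  "zsub s = ((1 - s^2) / (3 * (1 + s^2))) powr (1/3)"

end

theory Submission
  imports Defs
begin

lemma P_expand: "Pfield a b lam eps x y = (-y + x*(x^3+x*y^2))
   + eps*(lam 1*x + (a 1 0 4 * y^4 + a 1 1 3 * x * y^3 + a 1 2 2 * x^2*y^2 + a 1 3 1 * x^3*y + a 1 4 0 * x^4))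
   + eps^2*(lam 2*x + (a 2 0 4 * y^4 + a 2 1 3 * x * y^3 + a 2 2 2 * x^2*y^2 + a 2 3 1 * x^3*y + a 2 4 0 * x^4))"
  by (simp add: Pfield_def numeral_2_eq_2 atMost_Suc eval_nat_numeral algebra_simps)

lemma Q_expand: "Qfield a b lam eps x y = (x + y*(x^3+x*y^2))
   + eps*(lam 1*y + (b 1 0 4 * y^4 + b 1 1 3 * x * y^3 + b 1 2 2 * x^2*y^2 + b 1 3 1 * x^3*y + b 1 4 0 * x^4))
   + eps^2*(lam 2*y + (b 2 0 4 * y^4 + b 2 1 3 * x * y^3 + b 2 2 2 * x^2*y^2 + b 2 3 1 * x^3*y + b 2 4 0 * x^4))"
  by (simp add: Qfield_def numeral_2_eq_2 atMost_Suc eval_nat_numeral algebra_simps)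

definition A1 :: "(nat \<Rightarrow> nat \<Rightarrow> nat \<Rightarrow> real) \<Rightarrow> real \<Rightarrow> real" where "A1 a \<theta> = a 1 0 4 * sin \<theta>^4 + a 1 1 3 * cos \<theta> * sin \<theta>^3 + a 1 2 2 * cos \<theta>^2 * sin \<theta>^2
   + a 1 3 1 * cos \<theta>^3 * sin \<theta> + a 1 4 0 * cos \<theta>^4"

lemma F0_alg: fixes x y r :: real assumes "x^2+y^2 = r^2" "r \<noteq> 0"
  shows "((x*(-y + x*(x^3+x*y^2)) + y*(x + y*(x^3+x*y^2)))/r)/((x*(x + y*(x^3+x*y^2)) - y*(-y + x*(x^3+x*y^2)))/r^2) = x*r^3"
proof -
  have 1: "x*(-y + x*(x^3+x*y^2)) + y*(x + y*(x^3+x*y^2)) = x*r^4"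
  proof -
    have "r^4 = (x^2+y^2)^2" by (simp add: assms(1) flip: power_mult) 
    then show ?thesis by (simp add: algebra_simps power2_eq_square power4_eq_xxxx power3_eq_cube)
  qed
  have 2: "x*(x + y*(x^3+x*y^2)) - y*(-y + x*(x^3+x*y^2)) = r^2"
    using assms(1) by (simp add: algebra_simps power2_eq_square power3_eq_cube)
  show ?thesis unfolding 1 2 using assms(2) by (simp add: field_simps power2_eq_square power4_eq_xxxx power3_eq_cube)
qed

lemma xy_r: fixes r t :: real shows "(r * cos t)^2 + (r * sin t)^2 = r^2"
proof -
  have "(r * cos t)^2 + (r * sin t)^2 = r^2 * (sin t ^2 + cos t^2)" by (simp add: power2_eq_square ring_distribs mult_ac)
  then show ?thesis by simp
qed

lemma F0_eq: assumes "r > 0" shows "F0 a b lam \<theta> r = r^4 * cos \<theta>"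
proof -
  have "F0 a b lam \<theta> r = ((r* cos \<theta>*(-(r* sin \<theta>) + r* cos \<theta>*((r* cos \<theta>)^3+r* cos \<theta>*(r* sin \<theta>)^2)) + r* sin \<theta>*(r* cos \<theta> + r* sin \<theta>*((r* cos \<theta>)^3+r* cos \<theta>*(r* sin \<theta>)^2)))/r)/((r* cos \<theta>*(r* cos \<theta> + r* sin \<theta>*((r* cos \<theta>)^3+r* cos \<theta>*(r* sin \<theta>)^2)) - r* sin \<theta>*(-(r* sin \<theta>) + r* cos \<theta>*((r* cos \<theta>)^3+r* cos \<theta>*(r* sin \<theta>)^2)))/r^2)"
    unfolding F0_def drdtheta_def Let_def P_expand Q_expand by simp
  also have "\<dots> = r * cos \<theta> * r^3" by (rule F0_alg[OF xy_r]) (use assms in auto)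
  finally show ?thesis by (simp add: power_eq_if)
qed

lemma D_alg: fixes x y r P1 P2 Q1 Q2 :: real assumes h: "x^2+y^2 = r^2" "r \<noteq> 0"
  shows "((\<lambda>e. ((x*((-y + x*(x^3+x*y^2)) + e*P1 + e^2*P2) + y*((x + y*(x^3+x*y^2)) + e*Q1 + e^2*Q2))/r)
      /((x*((x + y*(x^3+x*y^2)) + e*Q1 + e^2*Q2) - y*((-y + x*(x^3+x*y^2)) + e*P1 + e^2*P2))/r^2))
    has_real_derivative ((x*P1+y*Q1)/r - r*x*(x*Q1-y*P1))) (at 0)"
proof -
  have 1: "x*(-y + x*(x^3+x*y^2)) + y*(x + y*(x^3+x*y^2)) = x*r^4"
  proof -
    have "r^4 = (x^2+y^2)^2" by (simp add: h(1) flip: power_mult) 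
    then show ?thesis by (simp add: algebra_simps power2_eq_square power4_eq_xxxx power3_eq_cube)
  qed
  have 2: "x*(x + y*(x^3+x*y^2)) - y*(-y + x*(x^3+x*y^2)) = r^2"
    using h(1) by (simp add: algebra_simps power2_eq_square power3_eq_cube)
  have n: "x*((-y + x*(x^3+x*y^2)) + e*P1 + e^2*P2) + y*((x + y*(x^3+x*y^2)) + e*Q1 + e^2*Q2)
     = x*r^4 + e*(x*P1+y*Q1) + e^2*(x*P2+y*Q2)" for e using 1 by (simp add: algebra_simps)
  have m: "x*((x + y*(x^3+x*y^2)) + e*Q1 + e^2*Q2) - y*((-y + x*(x^3+x*y^2)) + e*P1 + e^2*P2)
     = r^2 + e*(x*Q1-y*P1) + e^2*(x*Q2-y*P2)" for e using 2 by (simp add: algebra_simps)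
  have d: "((\<lambda>e. r * (x*r^4 + e*(x*P1+y*Q1) + e^2*(x*P2+y*Q2)) / (r^2 + e*(x*Q1-y*P1) + e^2*(x*Q2-y*P2)))
    has_real_derivative ((x*P1+y*Q1)/r - r*x*(x*Q1-y*P1))) (at 0)"
    apply (rule derivative_eq_intros refl)+
    using h(2) apply simp
    using h(2) apply (simp add: field_simps power2_eq_square power4_eq_xxxx)
    done
  have q: "(NN/r)/(MM/r^2) = r*NN/MM" for NN MM using h(2) by (simp add: divide_divide_eq_right power2_eq_square)
  show ?thesis unfolding n m q using d by simp
qed

lemma A1_poly: fixes c :: "nat \<Rightarrow> nat \<Rightarrow> nat \<Rightarrow> real" and r t :: real shows "c 1 0 4 * (r * sin t)^4 + c 1 1 3 * (r * cos t) * (r * sin t)^3 + c 1 2 2 * (r * cos t)^2 * (r * sin t)^2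
   + c 1 3 1 * (r * cos t)^3 * (r * sin t) + c 1 4 0 * (r * cos t)^4 = r^4 * A1 c t"
  by (simp add: A1_def power_mult_distrib algebra_simps eval_nat_numeral)

lemma F1_eq: assumes "r > 0"
  shows "F1 a b lam \<theta> r = lam 1 * r + r^4 * (cos \<theta> * A1 a \<theta> + sin \<theta> * A1 b \<theta>)
     - r^7 * cos \<theta> * (cos \<theta> * A1 b \<theta> - sin \<theta> * A1 a \<theta>)"
proof -
  define x where "x = r * cos \<theta>"
  define y where "y = r * sin \<theta>"
  define P1 where "P1 = lam 1*x + (a 1 0 4 * y^4 + a 1 1 3 * x * y^3 + a 1 2 2 * x^2*y^2 + a 1 3 1 * x^3*y + a 1 4 0 * x^4)"
  define P2 where "P2 = lam 2*x + (a 2 0 4 * y^4 + a 2 1 3 * x * y^3 + a 2 2 2 * x^2*y^2 + a 2 3 1 * x^3*y + a 2 4 0 * x^4)"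
  define Q1 where "Q1 = lam 1*y + (b 1 0 4 * y^4 + b 1 1 3 * x * y^3 + b 1 2 2 * x^2*y^2 + b 1 3 1 * x^3*y + b 1 4 0 * x^4)"
  define Q2 where "Q2 = lam 2*y + (b 2 0 4 * y^4 + b 2 1 3 * x * y^3 + b 2 2 2 * x^2*y^2 + b 2 3 1 * x^3*y + b 2 4 0 * x^4)"
  have fe: "(\<lambda>eps. drdtheta a b lam eps \<theta> r) = (\<lambda>e. ((x*((-y + x*(x^3+x*y^2)) + e*P1 + e^2*P2) + y*((x + y*(x^3+x*y^2)) + e*Q1 + e^2*Q2))/r)
      /((x*((x + y*(x^3+x*y^2)) + e*Q1 + e^2*Q2) - y*((-y + x*(x^3+x*y^2)) + e*P1 + e^2*P2))/r^2))"
    unfolding drdtheta_def Let_def P_expand Q_expand x_def y_def P1_def P2_def Q1_def Q2_def by simp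
  have F1v: "F1 a b lam \<theta> r = (x*P1+y*Q1)/r - r*x*(x*Q1-y*P1)"
    unfolding F1_def fe
    by (rule DERIV_imp_deriv, rule D_alg) (use assms in \<open>auto simp: x_def y_def xy_r\<close>)
  have P1': "P1 = lam 1 * x + r^4 * A1 a \<theta>" unfolding P1_def x_def y_def A1_poly ..
  have Q1': "Q1 = lam 1 * y + r^4 * A1 b \<theta>" unfolding Q1_def x_def y_def A1_poly ..
  have sc: "x*x + y*y = r^2" using xy_r[of r \<theta>] by (simp add: x_def y_def power2_eq_square)
  have "(x*P1+y*Q1)/r = lam 1 * (x*x+y*y)/r + r^3 * (x * A1 a \<theta> + y * A1 b \<theta>)"
    using assms unfolding P1' Q1' by (simp add: field_simps eval_nat_numeral)
  also have "\<dots> = lam 1 * r + r^4 * (cos \<theta> * A1 a \<theta> + sin \<theta> * A1 b \<theta>)"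
    unfolding sc using assms by (simp add: x_def y_def field_simps eval_nat_numeral)
  finally have e1: "(x*P1+y*Q1)/r = lam 1 * r + r^4 * (cos \<theta> * A1 a \<theta> + sin \<theta> * A1 b \<theta>)" .
  have e2: "r*x*(x*Q1-y*P1) = r^7 * cos \<theta> * (cos \<theta> * A1 b \<theta> - sin \<theta> * A1 a \<theta>)"
    unfolding P1' Q1' x_def y_def by (simp add: algebra_simps eval_nat_numeral)
  show ?thesis unfolding F1v e1 e2 ..
qed

lemma F0_deriv: assumes "\<rho> > 0"
  shows "((\<lambda>\<rho>. F0 a b lam \<theta> \<rho>) has_real_derivative 4 * \<rho>^3 * cos \<theta>) (at \<rho>)"
proof -
  have ev: "eventually (\<lambda>x. x > 0) (nhds \<rho>)" using eventually_nhds_in_open[OF open_greaterThan, of \<rho> 0] assms by simp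
  have "((\<lambda>\<rho>. \<rho>^4 * cos \<theta>) has_real_derivative 4 * \<rho>^3 * cos \<theta>) (at \<rho>)"
    by (auto intro!: derivative_eq_intros)
  moreover have "((\<lambda>\<rho>. F0 a b lam \<theta> \<rho>) has_real_derivative 4 * \<rho>^3 * cos \<theta>) (at \<rho>) \<longleftrightarrow>
     ((\<lambda>\<rho>. \<rho>^4 * cos \<theta>) has_real_derivative 4 * \<rho>^3 * cos \<theta>) (at \<rho>)"
    by (rule DERIV_cong_ev) (use ev in \<open>auto elim!: eventually_mono simp: F0_eq\<close>)
  ultimately show ?thesis by simp
qed

lemma Dom_iff: "z \<in> Dom \<longleftrightarrow> 0 < z \<and> 3 * z^3 < 1"
proof -
  have c: "(3 powr (-1/3::real))^3 = 1/3"
  proof -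
    have "(3 powr (-1/3::real))^3 = 3 powr (real 3 * (-1/3))" by (rule powr_power) simp
    also have "\<dots> = 1/3" by (simp add: powr_minus_divide)
    finally show ?thesis .
  qed
  have "z < 3 powr (-1/3) \<longleftrightarrow> z^3 < (3 powr (-1/3))^3" if "z > 0"
    using that by (meson less_le_not_le order_less_imp_le power_less_imp_less_base power_strict_mono powr_ge_zero zero_less_numeral)
  then show ?thesis unfolding Dom_def c by auto
qed

lemma D_pos: "z \<in> Dom \<Longrightarrow> 1 - 3 * z^3 * sin t > 0"
proof -
  assume "z \<in> Dom"
  then have "0 < z" "3 * z^3 < 1" by (auto simp: Dom_iff)
  moreover have "3 * z^3 * sin t \<le> 3 * z^3" using \<open>0<z\<close> by (simp add: mult_left_le)
  ultimately show ?thesis by linarith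
qed

lemma rsol_props: assumes "z \<in> Dom"
  shows "(rsol z has_real_derivative F0 a b lam \<theta> (rsol z \<theta>)) (at \<theta>)
             \<and> rsol z \<theta> > 0 \<and> rsol z (\<theta> + 2*pi) = rsol z \<theta>"
proof -
  have z: "z > 0" using assms by (auto simp: Dom_iff)
  define D where "D = 1 - 3 * z^3 * sin \<theta>"
  have D: "D > 0" unfolding D_def using D_pos[OF assms] .
  have pos: "rsol z \<theta> > 0" using z D by (simp add: rsol_def D_def)
  have der: "(rsol z has_real_derivative z * ((-1/3) * D powr (-1/3 - 1) * (- (3 * z^3 * cos \<theta>)))) (at \<theta>)"
    unfolding rsol_def D_def using D[unfolded D_def]
    by (auto intro!: derivative_eq_intros DERIV_fun_powr[THEN DERIV_cong])
  have p4: "(D powr (-1/3))^4 = D powr (-4/3)" by (subst powr_power) (use D in auto)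
  have "z * ((-1/3) * D powr (-1/3 - 1) * (- (3 * z^3 * cos \<theta>))) = (z * D powr (-1/3))^4 * cos \<theta>"
    unfolding power_mult_distrib p4 by (simp add: eval_nat_numeral)
  also have "\<dots> = F0 a b lam \<theta> (rsol z \<theta>)" using pos by (simp add: F0_eq rsol_def D_def)

  finally show ?thesis using der pos by (simp add: rsol_def)
qed

lemma Ysol_props: assumes "z \<in> Dom"
  shows "Ysol z 0 = 1 \<and> (Ysol z has_real_derivative
               (deriv (\<lambda>\<rho>. F0 a b lam \<theta> \<rho>) (rsol z \<theta>) * Ysol z \<theta>)) (at \<theta>)"
proof -
  have z: "z > 0" using assms by (auto simp: Dom_iff)
  define D where "D = 1 - 3 * z^3 * sin \<theta>"
  have D: "D > 0" unfolding D_def using D_pos[OF assms] .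
  have pos: "rsol z \<theta> > 0" using z D by (simp add: rsol_def D_def)
  have dv: "deriv (\<lambda>\<rho>. F0 a b lam \<theta> \<rho>) (rsol z \<theta>) = 4 * rsol z \<theta> ^3 * cos \<theta>"
    by (rule DERIV_imp_deriv[OF F0_deriv[OF pos]])
  have der: "(Ysol z has_real_derivative ((-4/3) * D powr (-4/3 - 1) * (- (3 * z^3 * cos \<theta>)))) (at \<theta>)"
    unfolding Ysol_def D_def using D[unfolded D_def]
    by (auto intro!: derivative_eq_intros DERIV_fun_powr[THEN DERIV_cong])
  have p3: "(D powr (-1/3))^3 = D powr (-1)" by (subst powr_power) (use D in auto)
  have pa: "D powr (-1) * D powr (-4/3) = D powr (-7/3)" unfolding powr_add[symmetric] by simp
  have eq: "(-4/3) * D powr (-4/3 - 1) * (- (3 * z^3 * cos \<theta>)) = 4 * rsol z \<theta> ^3 * cos \<theta> * Ysol z \<theta>"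
    unfolding rsol_def Ysol_def D_def[symmetric] power_mult_distrib p3
    using pa D by (simp add: mult_ac powr_minus_divide)
  show ?thesis unfolding dv using DERIV_cong[OF der eq] by (simp add: Ysol_def)
qed

lemma cube_root_cube: assumes "(x::real) > 0" shows "(x^3) powr (1/3) = x"
proof -
  have e: "x powr 3 = x^3" using powr_realpow[of x 3] assms by simp
  have "(x^3) powr (1/3) = (x powr 3) powr (1/3)" by (simp only: e)
  also have "\<dots> = x powr 1" by (simp add: powr_powr)
  also have "\<dots> = x" using assms by simp
  finally show ?thesis .
qed

lemma root_cube: assumes "(x::real) > 0" shows "(x powr (1/3))^3 = x"
proof -
  have "(x powr (1/3))^3 = x powr (real 3 * (1/3))" using assms by (intro powr_power) simp
  then show ?thesis using assms by simp
qed

lemma zsub_cube: assumes "0 < s" "s < 1" shows "zsub s ^ 3 = (1 - s^2) / (3 * (1 + s^2))" "zsub s > 0"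
proof -
  have "s^2 < 1" using assms by (simp add: power_less_one_iff)
  then have t: "(1 - s^2) / (3 * (1 + s^2)) > 0" by (simp add: add_pos_nonneg)
  show "zsub s ^ 3 = (1 - s^2) / (3 * (1 + s^2))" unfolding zsub_def using root_cube[OF t] .
  show "zsub s > 0" unfolding zsub_def using t by (simp only: powr_gt_zero)
qed

lemma zsub_bij: "bij_betw zsub {0<..<1} Dom"
  unfolding bij_betw_def
proof
  show "inj_on zsub {0<..<1}"
  proof (rule inj_onI)
    fix s1 s2 :: real assume s1: "s1 \<in> {0<..<1}" and s2: "s2 \<in> {0<..<1}" and eq: "zsub s1 = zsub s2"
    then have "(1 - s1^2) / (3 * (1 + s1^2)) = (1 - s2^2) / (3 * (1 + s2^2))"
      using zsub_cube(1)[of s1] zsub_cube(1)[of s2] by auto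
    then have "(1 - s1^2) * (1 + s2^2) = (1 - s2^2) * (1 + s1^2)"
      by (simp add: field_simps add_pos_nonneg add_nonneg_eq_0_iff)
    then have "s1^2 = s2^2" by (simp add: algebra_simps)
    then show "s1 = s2" using s1 s2 by (simp add: power2_eq_iff_nonneg)
  qed
  show "zsub ` {0<..<1} = Dom"
  proof (intro equalityI subsetI)
    fix z assume "z \<in> zsub ` {0<..<1}"
    then obtain s where s: "0 < s" "s < 1" and z: "z = zsub s" by auto
    have "s^2 < 1" using s by (simp add: power_less_one_iff)
    then have "3 * ((1 - s^2) / (3 * (1 + s^2))) < 1" using s by (simp add: field_simps add_pos_nonneg)
    then show "z \<in> Dom" unfolding Dom_iff z zsub_cube[OF s] using zsub_cube(2)[OF s] by simp
  next
    fix z assume "z \<in> Dom"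
    then have z: "0 < z" "3 * z^3 < 1" by (auto simp: Dom_iff)
    define u where "u = 3 * z^3"
    have u: "0 < u" "u < 1" using z by (auto simp: u_def)
    define s where "s = sqrt ((1 - u) / (1 + u))"
    have s2: "s^2 = (1 - u) / (1 + u)" unfolding s_def using u by simp
    have s: "0 < s" "s < 1" unfolding s_def using u by (auto simp: field_simps)
    have "zsub s = ((1 - s^2) / (3 * (1 + s^2))) powr (1/3)" by (simp add: zsub_def)
    also have "(1 - s^2) / (3 * (1 + s^2)) = z^3" 
    proof -
      have "(1 - s^2) / (3 * (1 + s^2)) = u/3" unfolding s2 using u by (simp add: field_simps)
      then show ?thesis by (simp add: u_def)
    qed
    also have "(z^3) powr (1/3) = z" using cube_root_cube z by blast
    finally show "z \<in> zsub ` {0<..<1}" using s by force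
  qed
qed

lemma KI_alg: fixes S C w den :: real
  assumes sc: "S^2 + C^2 = 1" and dd: "den = C^2 + w*S^2" and dp: "den > 0" and qp: "C^2 + w^2*S^2 > 0"
  shows "inverse (1 + ((w - 1) * S * C / den)^2) * (((w-1)*(C*C - S*S) * den - (w-1)*S*C*(2*C*(-S) + w*(2*S*C))) / (den*den))
    = w / (C^2 + w^2*S^2) - 1"
proof -
  have "den^2 + ((w-1)*S*C)^2 = (C^2+w^2*S^2)*(S^2+C^2)" unfolding dd by algebra
  then have a: "den^2 + ((w-1)*S*C)^2 = C^2+w^2*S^2" using sc by simp
  have h1: "1 + ((w - 1) * S * C / den)^2 = (C^2+w^2*S^2)/den^2"
    using dp unfolding a[symmetric] by (simp add: field_simps power_divide)
  have "(w-1)*(C*C - S*S) * den - (w-1)*S*C*(2*C*(-S) + w*(2*S*C)) = w*(S^2+C^2)^2 - (C^2+w^2*S^2)*(S^2+C^2)"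
    unfolding dd by algebra
  then have h2: "(w-1)*(C*C - S*S) * den - (w-1)*S*C*(2*C*(-S) + w*(2*S*C)) = w - (C^2+w^2*S^2)"
    using sc by simp
  have g: "\<And>q. q > 0 \<Longrightarrow> 1/(q/den^2) * ((w - q)/(den*den)) = w/q - 1"
    using dp by (simp add: field_simps power2_eq_square)
  show ?thesis unfolding h1 h2 using g[OF qp] by (simp add: inverse_eq_divide)
qed

lemma KI_deriv: fixes w :: real assumes w: "w > 0"
  shows "((\<lambda>t. (t + arctan ((w - 1) * sin t * cos t / (cos t ^ 2 + w * sin t ^ 2))) / w)
     has_real_derivative 1 / (1 - (1 - w^2) * sin t ^ 2)) (at t)"
proof -
  have sc: "sin t ^2 + cos t ^2 = 1" by simp
  have pos: "cos t ^ 2 + w * sin t ^ 2 > 0"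
  proof (cases "sin t = 0")
    case True then have "cos t ^2 = 1" using sc by simp
    then show ?thesis using True by simp
  next
    case False then show ?thesis using w by (simp add: add_nonneg_pos)
  qed
  have e1: "1 - (1 - w^2) * sin t ^ 2 = cos t ^2 + w^2 * sin t ^2" using sc by (simp add: algebra_simps)
  have pos2: "cos t ^2 + w^2 * sin t ^2 > 0"
  proof (cases "sin t = 0")
    case True then have "cos t ^2 = 1" using sc by simp
    then show ?thesis using True by simp
  next
    case False then show ?thesis using w by (simp add: add_nonneg_pos)
  qed
  have dn: "((\<lambda>t. (w - 1) * sin t * cos t) has_real_derivative (w-1)*(cos t* cos t - sin t* sin t)) (at t)"
    by (auto intro!: derivative_eq_intros simp: algebra_simps)
  have dd: "((\<lambda>t. cos t ^ 2 + w * sin t ^ 2) has_real_derivative (2* cos t*(-sin t) + w*(2* sin t* cos t))) (at t)"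
    by (auto intro!: derivative_eq_intros simp: algebra_simps)
  have "((\<lambda>t. arctan ((w - 1) * sin t * cos t / (cos t ^ 2 + w * sin t ^ 2))) has_real_derivative
       (inverse (1 + ((w - 1) * sin t * cos t / (cos t ^ 2 + w * sin t ^ 2))^2) *
        (((w-1)*(cos t* cos t - sin t* sin t) * (cos t ^ 2 + w * sin t ^ 2) - (w-1)* sin t* cos t*(2* cos t*(-sin t) + w*(2* sin t* cos t)))
          / ((cos t ^ 2 + w * sin t ^ 2)*(cos t ^ 2 + w * sin t ^ 2))))) (at t)"
    by (rule DERIV_chain2[OF DERIV_arctan DERIV_divide[OF dn dd]]) (use pos in auto)
  also have "(inverse (1 + ((w - 1) * sin t * cos t / (cos t ^ 2 + w * sin t ^ 2))^2) *
        (((w-1)*(cos t* cos t - sin t* sin t) * (cos t ^ 2 + w * sin t ^ 2) - (w-1)* sin t* cos t*(2* cos t*(-sin t) + w*(2* sin t* cos t)))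
          / ((cos t ^ 2 + w * sin t ^ 2)*(cos t ^ 2 + w * sin t ^ 2)))) = w / (cos t ^2 + w^2 * sin t ^2) - 1"
    by (rule KI_alg[OF sc refl pos pos2])
  finally have A: "((\<lambda>t. arctan ((w - 1) * sin t * cos t / (cos t ^ 2 + w * sin t ^ 2))) has_real_derivative
       (w / (cos t ^2 + w^2 * sin t ^2) - 1)) (at t)" .
  have "((\<lambda>t. (t + arctan ((w - 1) * sin t * cos t / (cos t ^ 2 + w * sin t ^ 2))) / w) has_real_derivative
       (1 + (w / (cos t ^2 + w^2 * sin t ^2) - 1)) / w) (at t)"
    by (intro DERIV_cdivide DERIV_add DERIV_ident A)
  then show ?thesis unfolding e1 by (rule DERIV_cong) (use pos2 w in simp)
qed

lemma FTC_real: fixes G g :: "real \<Rightarrow> real"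
  assumes "\<And>x. (G has_real_derivative g x) (at x)" "a \<le> b"
  shows "(g has_integral (G b - G a)) {a..b}"
  by (rule fundamental_theorem_of_calculus[OF assms(2)])
     (use assms(1) in \<open>auto intro: has_vector_derivative_at_within simp: has_real_derivative_iff_has_vector_derivative\<close>)

lemma KI_int: fixes w :: real assumes w: "w > 0"
  shows "((\<lambda>t. 1 / (1 - (1 - w^2) * sin t ^ 2)) has_integral 2*pi/w) {0..2*pi}"
  using FTC_real[OF KI_deriv[OF w], of 0 "2*pi"] by simp

lemma sin2_int: "((\<lambda>t. sin t ^ 2) has_integral pi) {0..2*pi}"
proof -
  have "((\<lambda>t. t/2 - sin t * cos t / 2) has_real_derivative sin x ^ 2) (at x)" for x
  proof -
    have "((\<lambda>t. t/2 - sin t * cos t / 2) has_real_derivative 1/2 - (cos x * cos x - sin x * sin x)/2) (at x)"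
      by (auto intro!: derivative_eq_intros simp: field_simps power2_eq_square power3_eq_cube)
    moreover have "1/2 - (cos x * cos x - sin x * sin x)/2 = sin x ^ 2"
      using sin_squared_eq[of x] by (simp add: power2_eq_square field_simps)
    ultimately show ?thesis by simp
  qed
  from FTC_real[OF this, of 0 "2*pi"] show ?thesis by simp
qed

lemma sin4_int: "((\<lambda>t. sin t ^ 4) has_integral 3*pi/4) {0..2*pi}"
proof -
  have "((\<lambda>t. 3*t/8 - 3 * sin t * cos t / 8 - sin t ^ 3 * cos t / 4) has_real_derivative sin x ^ 4) (at x)" for x
  proof -
    have "((\<lambda>t. 3*t/8 - 3 * sin t * cos t / 8 - sin t ^ 3 * cos t / 4) has_real_derivative
      3/8 - 3*(cos x * cos x - sin x * sin x)/8 - (3 * sin x^2 * cos x * cos x - sin x ^3 * sin x)/4) (at x)"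
      by (auto intro!: derivative_eq_intros simp: field_simps power2_eq_square power3_eq_cube)
    moreover have "3/8 - 3*(cos x * cos x - sin x * sin x)/8 - (3 * sin x^2 * cos x * cos x - sin x ^3 * sin x)/4 = sin x ^ 4"
    proof -
      have c: "cos x * cos x = 1 - sin x ^2" using sin_squared_eq[of x] by (simp add: power2_eq_square)
      show ?thesis unfolding mult.assoc[of "3 * sin x ^ 2"] c by (simp add: field_simps power2_eq_square eval_nat_numeral)
    qed
    ultimately show ?thesis by simp
  qed
  from FTC_real[OF this, of 0 "2*pi"] show ?thesis by simp
qed

lemma cos_sub_int: fixes g :: "real \<Rightarrow> real" assumes "continuous_on {-1..1} g"
  shows "((\<lambda>t. cos t * g (sin t)) has_integral 0) {0..2*pi}"
proof -
  have "((\<lambda>x. cos x *\<^sub>R g (sin x)) has_integral (integral {sin 0..sin (2*pi)} g)) {0..2*pi}"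
    by (rule has_integral_substitution[where c="-1" and d=1])
       (use assms in \<open>auto intro!: derivative_eq_intros\<close>)
  then show ?thesis by simp
qed

lemma odd_sin_int: fixes g :: "real \<Rightarrow> real" assumes "continuous_on {-1..1} g" and odd: "\<And>x. g (-x) = - g x"
  shows "((\<lambda>t. g (sin t)) has_integral 0) {0..2*pi}"
proof -
  have c: "continuous_on {0..2*pi} (\<lambda>t. g (sin t))"
    by (rule continuous_on_compose2[OF assms(1) continuous_on_sin]) auto
  then obtain I where I: "((\<lambda>t. g (sin t)) has_integral I) {0..2*pi}"
    using integrable_continuous_real by blast
  have "((\<lambda>x. g (sin (- x))) has_integral I) {-(2*pi)..-0}" using has_integral_reflect_lemma_real[OF I] .
  from has_integral_shift_real_ivl[OF this, of "-(2*pi)"]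
  have "((\<lambda>x. g (sin (- (x + -(2*pi))))) has_integral I) {-(2*pi) - -(2*pi)..-0 - -(2*pi)}" .
  moreover have "{-(2*pi) - -(2*pi)..-0 - -(2*pi)} = {0..2*pi}" by simp
  ultimately have "((\<lambda>x. g (sin (- (x + -(2*pi))))) has_integral I) {0..2*pi}" by (simp only:)
  moreover have "g (sin (- (x + -(2*pi)))) = - g (sin x)" for x
  proof -
    have "sin (- (x + -(2*pi))) = - sin x" by (simp add: sin_diff)
    then show ?thesis using odd by simp
  qed
  ultimately have "((\<lambda>x. - g (sin x)) has_integral I) {0..2*pi}" by simp
  from has_integral_neg[OF this] have "((\<lambda>x. g (sin x)) has_integral -I) {0..2*pi}" by simp
  with I have "I = -I" using has_integral_unique by blast
  then show ?thesis using I by simp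
qed

definition vP :: "(nat \<Rightarrow> nat \<Rightarrow> nat \<Rightarrow> real) \<Rightarrow> (nat \<Rightarrow> nat \<Rightarrow> nat \<Rightarrow> real) \<Rightarrow> real \<Rightarrow> real" where
  "vP a b x = a 1 0 4 * x^4 + a 1 2 2 * (1-x^2) * x^2 + a 1 4 0 * (1-x^2)^2 + b 1 1 3 * x^4 + b 1 3 1 * (1-x^2) * x^2"
definition wP :: "(nat \<Rightarrow> nat \<Rightarrow> nat \<Rightarrow> real) \<Rightarrow> (nat \<Rightarrow> nat \<Rightarrow> nat \<Rightarrow> real) \<Rightarrow> real \<Rightarrow> real" where
  "wP a b x = a 1 1 3 * (1-x^2) * x^3 + a 1 3 1 * (1-x^2)^2 * x + b 1 0 4 * x^5 + b 1 2 2 * (1-x^2) * x^3 + b 1 4 0 * (1-x^2)^2 * x"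
definition uP :: "(nat \<Rightarrow> nat \<Rightarrow> nat \<Rightarrow> real) \<Rightarrow> (nat \<Rightarrow> nat \<Rightarrow> nat \<Rightarrow> real) \<Rightarrow> real \<Rightarrow> real" where
  "uP a b x = b 1 1 3 * (1-x^2) * x^3 + b 1 3 1 * (1-x^2)^2 * x - a 1 0 4 * x^5 - a 1 2 2 * (1-x^2) * x^3 - a 1 4 0 * (1-x^2)^2 * x"
definition eP :: "(nat \<Rightarrow> nat \<Rightarrow> nat \<Rightarrow> real) \<Rightarrow> (nat \<Rightarrow> nat \<Rightarrow> nat \<Rightarrow> real) \<Rightarrow> real \<Rightarrow> real" where
  "eP a b x = (1-x^2) * (b 1 0 4 * x^4 + b 1 2 2 * (1-x^2) * x^2 + b 1 4 0 * (1-x^2)^2 - a 1 1 3 * x^4 - a 1 3 1 * (1-x^2) * x^2)"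

lemma trig_a: "cos t * A1 a t + sin t * A1 b t = cos t * vP a b (sin t) + wP a b (sin t)"
proof -
  have sc: "sin t ^2 + cos t ^2 = 1" by simp
  show ?thesis unfolding A1_def vP_def wP_def using sc by algebra
qed

lemma trig_b: "cos t * (cos t * A1 b t - sin t * A1 a t) = eP a b (sin t) + cos t * uP a b (sin t)"
proof -
  have sc: "sin t ^2 + cos t ^2 = 1" by simp
  show ?thesis unfolding A1_def eP_def uP_def using sc by algebra
qed

lemma integrand_eq: assumes "z \<in> Dom"
  shows "F1 a b lam t (rsol z t) / Ysol z t = lam 1 * z * (1 - 3*z^3 * sin t)
     + z^4 * (cos t * vP a b (sin t) + wP a b (sin t))
     - z^7 * (eP a b (sin t) + cos t * uP a b (sin t)) / (1 - 3*z^3 * sin t)"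
proof -
  define D where "D = 1 - 3 * z^3 * sin t"
  have D: "D > 0" unfolding D_def using D_pos[OF assms] .
  define q where "q = D powr (1/3)"
  have q: "q > 0" using D by (simp add: q_def)
  have Dq: "D = q^3" unfolding q_def using root_cube[OF D] by simp
  have r: "rsol z t = z / q" unfolding rsol_def D_def[symmetric] q_def
    by (simp add: powr_minus_divide)
  have Y: "Ysol z t = 1 / q^4"
  proof -
    have "(D powr (1/3))^4 = D powr (real 4 * (1/3))" using D by (intro powr_power) simp
    then have "D powr (4/3) = q^4" by (simp add: q_def)
    then show ?thesis unfolding Ysol_def D_def[symmetric] by (simp add: powr_minus_divide)
  qed
  have z: "z > 0" using assms by (auto simp: Dom_iff)
  have rp: "rsol z t > 0" using z q r by simp
  have f: "F1 a b lam t (rsol z t) = lam 1 * rsol z t + rsol z t ^4 * (cos t * vP a b (sin t) + wP a b (sin t))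
     - rsol z t ^7 * (eP a b (sin t) + cos t * uP a b (sin t))"
    unfolding F1_eq[OF rp] trig_a[symmetric] trig_b[symmetric] by (simp add: mult.assoc)
  show ?thesis
    unfolding f unfolding D_def[symmetric] Dq r Y using q
    by (simp add: field_simps eval_nat_numeral)
qed

definition e0c :: "(nat \<Rightarrow> nat \<Rightarrow> nat \<Rightarrow> real) \<Rightarrow> (nat \<Rightarrow> nat \<Rightarrow> nat \<Rightarrow> real) \<Rightarrow> real" where
  "e0c a b = b 1 4 0"
definition e1c :: "(nat \<Rightarrow> nat \<Rightarrow> nat \<Rightarrow> real) \<Rightarrow> (nat \<Rightarrow> nat \<Rightarrow> nat \<Rightarrow> real) \<Rightarrow> real" where
  "e1c a b = (b 1 2 2 - a 1 3 1) - 3 * b 1 4 0"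
definition e2c :: "(nat \<Rightarrow> nat \<Rightarrow> nat \<Rightarrow> real) \<Rightarrow> (nat \<Rightarrow> nat \<Rightarrow> nat \<Rightarrow> real) \<Rightarrow> real" where
  "e2c a b = (b 1 0 4 - a 1 1 3) - 2 * (b 1 2 2 - a 1 3 1) + 3 * b 1 4 0"
definition e3c :: "(nat \<Rightarrow> nat \<Rightarrow> nat \<Rightarrow> real) \<Rightarrow> (nat \<Rightarrow> nat \<Rightarrow> nat \<Rightarrow> real) \<Rightarrow> real" where
  "e3c a b = - (b 1 0 4 - a 1 1 3) + (b 1 2 2 - a 1 3 1) - b 1 4 0"
definition p2c where "p2c a b d = - e3c a b / d"
definition p1c where "p1c a b d = (p2c a b d - e2c a b) / d"
definition p0c where "p0c a b d = (p1c a b d - e1c a b) / d"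
definition Kc where "Kc a b d = e0c a b - p0c a b d"

lemma eP_div: assumes "d \<noteq> 0"
  shows "eP a b x = (1 - d * x^2) * (p0c a b d + p1c a b d * x^2 + p2c a b d * x^4) + Kc a b d"
proof -
  have "eP a b x = e0c a b + e1c a b * x^2 + e2c a b * x^4 + e3c a b * x^6"
    unfolding eP_def e0c_def e1c_def e2c_def e3c_def by algebra
  also have "\<dots> = (1 - d * x^2) * (p0c a b d + p1c a b d * x^2 + p2c a b d * x^4) + Kc a b d"
    unfolding Kc_def p0c_def p1c_def p2c_def using assms by (simp add: field_simps eval_nat_numeral)
  finally show ?thesis .
qed

lemma lin_pos: fixes c x :: real assumes "0 \<le> c" "c < 1" "x \<in> {-1..1}" shows "1 - c * x > 0"
proof -
  have "c * x \<le> c * 1" using assms by (intro mult_left_mono) auto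
  then show ?thesis using assms by linarith
qed

lemma decomp_gen: fixes m p y C lz z V W U E P K :: real
  assumes nz: "m \<noteq> 0" "p \<noteq> 0" and my: "m = 1 - y" "p = 1 + y" and E: "E = (m * p) * P + K"
  shows "lz * m + z^4 * (C * V + W) - z^7 * (E + C * U) / m
   = C * (z^4 * V - z^7 * U / m)
     + (- lz * y + z^4 * W - z^7 * (y * E / (m * p)))
     + (lz - z^7 * P)
     - z^7 * K * (1 / (m * p))"
proof -
  have "z^7 * (E + C * U) / m = z^7 * p * P + z^7 * K / m + z^7 * C * U / m"
    unfolding E using nz by (simp add: field_simps)
  moreover have "z^7 * (y * E / (m * p)) = z^7 * y * P + z^7 * y * K / (m * p)"
    unfolding E using nz by (simp add: field_simps)
  moreover have "z^7 * K / m = z^7 * y * K / (m * p) + z^7 * K * (1 / (m * p))"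
  proof -
    have "z^7 * y * K / (m * p) + z^7 * K * (1 / (m * p)) = z^7 * K * (p / (m * p))"
      unfolding my(2) by (simp add: field_simps add_divide_distrib)
    also have "\<dots> = z^7 * K / m" using nz by simp
    finally show ?thesis by simp
  qed
  ultimately show ?thesis unfolding my by (simp add: algebra_simps)
qed

lemma decomp: fixes c d x C lz z :: real
  assumes d: "d = c^2" "d \<noteq> 0" and nz: "1 - c * x \<noteq> 0" "1 + c * x \<noteq> 0"
  shows "lz * (1 - c * x) + z^4 * (C * vP a b x + wP a b x) - z^7 * (eP a b x + C * uP a b x) / (1 - c * x)
   = C * (z^4 * vP a b x - z^7 * uP a b x / (1 - c * x))
     + (- lz * (c * x) + z^4 * wP a b x - z^7 * ((c * x) * eP a b x / (1 - d * x^2)))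
     + (lz - z^7 * (p0c a b d + p1c a b d * x^2 + p2c a b d * x^4))
     - z^7 * Kc a b d * (1 / (1 - d * x^2))"
proof -
  have f: "1 - d * x^2 = (1 - c*x) * (1 + c*x)" unfolding d by (simp add: algebra_simps power2_eq_square)
  have e: "eP a b x = ((1 - c*x) * (1 + c*x)) * (p0c a b d + p1c a b d * x^2 + p2c a b d * x^4) + Kc a b d"
    using eP_div[OF d(2), of a b x] unfolding f .
  show ?thesis unfolding f by (rule decomp_gen[OF nz refl refl e])
qed

lemma integral_main: fixes c d w z :: real
  assumes z: "z \<in> Dom" and w: "w > 0" and c: "c = 3*z^3" and d: "d = c^2" and wd: "1 - w^2 = d"
  shows "((\<lambda>t. F1 a b lam t (rsol z t) / Ysol z t) has_integral
     (0 + 0 + (lam 1 * z * (2*pi) - z^7 * (p0c a b d * (2*pi) + p1c a b d * pi + p2c a b d * (3*pi/4)))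
       - z^7 * Kc a b d * (2*pi/w))) {0..2*pi}"
proof -
  define lz where "lz = lam 1 * z"
  have c01: "0 < c" "c < 1" using z unfolding c by (auto simp: Dom_iff)
  have d0: "d \<noteq> 0" using c01 d by simp
  have nzm: "\<forall>x\<in>{-1..1}. 1 - c * x \<noteq> 0" using lin_pos[of c] c01 by force
  have nzp: "\<forall>x\<in>{-1..1}. 1 + c * x \<noteq> 0"
  proof
    fix x :: real assume "x \<in> {-1..1}"
    then have "-x \<in> {-1..1}" by auto
    then show "1 + c * x \<noteq> 0" using lin_pos[of c "-x"] c01 by force
  qed
  have nzd: "\<forall>x\<in>{-1..1}. 1 - d * x^2 \<noteq> 0"
  proof
    fix x :: real assume x: "x \<in> {-1..1}"
    have "1 - d * x^2 = (1 - c*x) * (1 + c*x)" unfolding d by (simp add: algebra_simps power2_eq_square)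
    then show "1 - d * x^2 \<noteq> 0" using nzm nzp x by simp
  qed
  have sin_in: "sin t \<in> {-1..1}" for t :: real by auto
  define V where "V = (\<lambda>x. z^4 * vP a b x - z^7 * uP a b x / (1 - c * x))"
  define Wo where "Wo = (\<lambda>x. - lz * (c * x) + z^4 * wP a b x - z^7 * ((c * x) * eP a b x / (1 - d * x^2)))"
  have fe: "(\<lambda>t. F1 a b lam t (rsol z t) / Ysol z t) = (\<lambda>t. cos t * V (sin t) + Wo (sin t)
       + (lz - z^7 * (p0c a b d + p1c a b d * sin t^2 + p2c a b d * sin t^4))
       - z^7 * Kc a b d * (1 / (1 - d * sin t^2)))"
  proof
    fix t
    show "F1 a b lam t (rsol z t) / Ysol z t = cos t * V (sin t) + Wo (sin t)
       + (lz - z^7 * (p0c a b d + p1c a b d * sin t^2 + p2c a b d * sin t^4))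
       - z^7 * Kc a b d * (1 / (1 - d * sin t^2))"
      unfolding integrand_eq[OF z] V_def Wo_def lz_def c[symmetric]
      by (rule decomp[OF d d0]) (use nzm nzp sin_in in auto)
  qed
  have I1: "((\<lambda>t. cos t * V (sin t)) has_integral 0) {0..2*pi}"
    by (rule cos_sub_int) (use nzm in \<open>auto intro!: continuous_intros simp: V_def vP_def uP_def\<close>)
  have I2: "((\<lambda>t. Wo (sin t)) has_integral 0) {0..2*pi}"
  proof (rule odd_sin_int)
    show "continuous_on {-1..1} Wo"
      using nzd by (auto intro!: continuous_intros simp: Wo_def wP_def eP_def)
    have o1: "wP a b (-x) = - wP a b x" for x unfolding wP_def by (simp add: power_minus_odd algebra_simps)
    have o2: "eP a b (-x) = eP a b x" for x unfolding eP_def by simp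
    show "Wo (- x) = - Wo x" for x
      unfolding Wo_def o1 o2 by (simp add: algebra_simps)
  qed
  have I3: "((\<lambda>t. lz - z^7 * (p0c a b d + p1c a b d * sin t^2 + p2c a b d * sin t^4)) has_integral
     (lz * (2*pi) - z^7 * (p0c a b d * (2*pi) + p1c a b d * pi + p2c a b d * (3*pi/4)))) {0..2*pi}"
  proof -
    have k: "((\<lambda>t. k) has_integral k * (2*pi)) {0..2*pi}" for k :: real
      using has_integral_const_real[of k 0 "2*pi"] by (simp add: mult.commute)
    show ?thesis
      by (intro has_integral_diff has_integral_add has_integral_mult_right k sin2_int sin4_int)
  qed
  have I4: "((\<lambda>t. 1 / (1 - d * sin t^2)) has_integral 2*pi/w) {0..2*pi}"
    using KI_int[OF w] unfolding wd .
  have "((\<lambda>t. cos t * V (sin t) + Wo (sin t)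
       + (lz - z^7 * (p0c a b d + p1c a b d * sin t^2 + p2c a b d * sin t^4))
       - z^7 * Kc a b d * (1 / (1 - d * sin t^2))) has_integral
       (0 + 0 + (lz * (2*pi) - z^7 * (p0c a b d * (2*pi) + p1c a b d * pi + p2c a b d * (3*pi/4)))
       - z^7 * Kc a b d * (2*pi/w))) {0..2*pi}"
    by (intro has_integral_diff has_integral_add has_integral_mult_right I1 I2 I3 I4)
  then show ?thesis unfolding fe lz_def .
qed

lemma A_alg: fixes c d w :: real assumes "d \<noteq> 0" "w \<noteq> 0"
  shows "d * (2 * p0c a b d + p1c a b d + 3/4 * p2c a b d + 2 * Kc a b d / w)
   = (2 - 2 * (1 / w)) * (- e3c a b * (1/d)^2 - e2c a b * (1/d) - e1c a b) - e3c a b * (1/d) - e2c a b - 3/4 * e3c a b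
     + 2 * (1/w) * e0c a b / (1/d)"
  unfolding Kc_def p0c_def p1c_def p2c_def using assms by (simp add: field_simps power2_eq_square)

lemma powr_third: "(x::real) > 0 \<Longrightarrow> x powr (n / 3) = (x powr (1/3))^n"
proof -
  assume x: "x > 0"
  have "(x powr (1/3))^n = x powr (real n * (1/3))" using x by (intro powr_power) simp
  then show ?thesis by simp
qed

lemma powr_factor: fixes s :: real assumes s: "0 < s" "s < 1"
  shows "3 powr (2/3) * (1 - s) powr (1/3) / (108 * (1 + s) powr (11/3) * (1 + s^2) powr (4/3))
    = 3 * zsub s / (108 * (1+s)^4 * (1+s^2))"
proof -
  define A where "A = (3::real) powr (1/3)"
  define B where "B = (1 - s) powr (1/3)"
  define C where "C = (1 + s) powr (1/3)"
  define E where "E = (1 + s^2) powr (1/3)"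
  have u: "1 + s^2 > 0" by (simp add: add_pos_nonneg)
  have Ap: "A > 0" "B > 0" "C > 0" "E > 0" using s u by (auto simp: A_def B_def C_def E_def)
  have A3: "A^3 = 3" unfolding A_def by (rule root_cube) simp
  have C3: "C^3 = 1 + s" unfolding C_def by (rule root_cube) (use s in simp)
  have E3: "E^3 = 1 + s^2" unfolding E_def by (rule root_cube) (use u in simp)
  have z: "zsub s = B * C / (A * E)"
  proof -
    have e: "(1 - s^2) / (3 * (1 + s^2)) = ((1 - s) * (1 + s)) / (3 * (1 + s^2))" by (simp add: algebra_simps power2_eq_square)
    show ?thesis unfolding zsub_def e A_def B_def C_def E_def by (simp only: powr_mult powr_divide)
  qed
  have p1: "3 powr (2/3) = A^2" unfolding A_def using powr_third[of 3 2] by simp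
  have p2: "(1 + s) powr (11/3) = C^11" unfolding C_def using powr_third[of "1+s" 11] s by simp
  have p3: "(1 + s^2) powr (4/3) = E^4" unfolding E_def using powr_third[of "1+s^2" 4] u by simp
  have "3 * zsub s / (108 * (1+s)^4 * (1+s^2)) = A^3 * (B * C / (A * E)) / (108 * (C^3)^4 * E^3)"
    unfolding z A3 C3 E3 ..
  also have "\<dots> = A^2 * B / (108 * C^11 * E^4)" using Ap by (simp add: field_simps eval_nat_numeral)
  finally show ?thesis unfolding p1 p2 p3 B_def[symmetric] by simp
qed

lemma B_alg2: fixes s Ba Bb bq u v q r iw ea eb ec ed :: real
  assumes s: "0 < s" and u: "u = 1 + s^2" and v: "v = 1 - s^2" "v > 0" and q: "q = 1 + s"
    and r: "r = u^2 / v^2" and iw: "iw = u / (2 * s)"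
    and e: "ea = bq" "eb = Bb - 3 * bq" "ec = Ba - 2 * Bb + 3 * bq" "ed = - Ba + Bb - bq"
  shows "(2 - 2 * iw) * (- ed * r^2 - ec * r - eb) - ed * r - ec - 3/4 * ed + 2 * iw * ea / r
   = - ((-3 * Ba - Bb - 3 * bq) * s^6 + (4 * Ba - 4 * Bb - 12 * bq) * s^5 + (-5 * Ba + 9 * Bb - 5 * bq) * s^4 + (8 * Ba - 8 * Bb + 40 * bq) * s^3
        + (-5 * Ba + 9 * Bb - 5 * bq) * s^2 + (4 * Ba - 4 * Bb - 12 * bq) * s + (-3 * Ba - Bb - 3 * bq)) / (4 * q^4 * u)"
proof -
  have up: "u > 0" unfolding u by (simp add: add_pos_nonneg)
  have qp: "q > 0" unfolding q using s by simp
  show ?thesis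
    unfolding r iw e
    using s up v(2) qp
    apply (simp add: field_simps)
    unfolding u v(1) q
    by algebra
qed

lemma f1_value: fixes s :: real assumes s: "0 < s" "s < 1"
  shows "let N1 = 3 * a 1 1 3 + a 1 3 1 - 3 * b 1 0 4 - b 1 2 2 - 3 * b 1 4 0 + 72 * lam 1;
            N2 = -4 * a 1 1 3 + 4 * b 1 0 4 + 4 * a 1 3 1 - 4 * b 1 2 2 - 12 * b 1 4 0 + 288 * lam 1;
            N3 = 5 * a 1 1 3 - 9 * a 1 3 1 - 5 * b 1 0 4 + 9 * b 1 2 2 - 5 * b 1 4 0 + 504 * lam 1;
            N4 = -8 * a 1 1 3 + 8 * a 1 3 1 + 8 * b 1 0 4 - 8 * b 1 2 2 + 40 * b 1 4 0 + 576 * lam 1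
        in f1 a b lam (zsub s) =
           pi * 3 powr (2/3) * (1 - s) powr (1/3)
             / (108 * (1 + s) powr (11/3) * (1 + s^2) powr (4/3))
           * (N1 * s^6 + N2 * s^5 + N3 * s^4 + N4 * s^3 + N3 * s^2 + N2 * s + N1)"
proof -
  define z where "z = zsub s"
  have zD: "z \<in> Dom" unfolding z_def using zsub_bij s unfolding bij_betw_def by auto
  have zp: "z > 0" using zD by (simp add: Dom_iff)
  define u where "u = 1 + s^2"
  define v where "v = 1 - s^2"
  define q where "q = 1 + s"
  have up: "u > 0" unfolding u_def by (simp add: add_pos_nonneg)
  have vp: "v > 0" unfolding v_def using s by (simp add: power_less_one_iff)
  have qp: "q > 0" unfolding q_def using s by simp
  define c where "c = 3 * z^3"
  define d where "d = c^2"
  define w where "w = 2 * s / u"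
  have cuv: "c = v / u" unfolding c_def z_def zsub_cube[OF s] u_def[symmetric] v_def[symmetric] using up by simp
  have wp: "w > 0" unfolding w_def using s up by simp
  have wd: "1 - w^2 = d" unfolding d_def cuv w_def using up
    by (simp add: field_simps u_def v_def) (simp add: algebra_simps power2_eq_square)
  have d0: "d \<noteq> 0" unfolding d_def cuv using vp up by simp
  note H = integral_main[OF zD wp c_def d_def wd, of a b lam]
  have Y1: "Ysol z (2*pi) = 1" by (simp add: Ysol_def)
  have f1v: "f1 a b lam z = 0 + 0 + (lam 1 * z * (2*pi) - z^7 * (p0c a b d * (2*pi) + p1c a b d * pi + p2c a b d * (3*pi/4)))
       - z^7 * Kc a b d * (2*pi/w)"
    unfolding f1_def Y1 using integral_unique[OF H] by simp
  have z7: "z^7 = z * d / 9" unfolding d_def c_def by (simp add: eval_nat_numeral)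
  have r_eq: "1/d = u^2/v^2" unfolding d_def cuv using up vp by (simp add: field_simps)
  have iw_eq: "1/w = u/(2 * s)" unfolding w_def by simp
  have "f1 a b lam z = z * pi * (2 * lam 1 - (1/9) * (d * (2 * p0c a b d + p1c a b d + 3/4 * p2c a b d + 2 * Kc a b d / w)))"
    unfolding f1v z7 by (simp add: field_simps)
  also have "d * (2 * p0c a b d + p1c a b d + 3/4 * p2c a b d + 2 * Kc a b d / w) =
     - (((-3 * (b 1 0 4 - a 1 1 3) - (b 1 2 2 - a 1 3 1) - 3 * b 1 4 0) * s^6
        + (4 * (b 1 0 4 - a 1 1 3) - 4 * (b 1 2 2 - a 1 3 1) - 12 * b 1 4 0) * s^5
        + (-5 * (b 1 0 4 - a 1 1 3) + 9 * (b 1 2 2 - a 1 3 1) - 5 * b 1 4 0) * s^4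
        + (8 * (b 1 0 4 - a 1 1 3) - 8 * (b 1 2 2 - a 1 3 1) + 40 * b 1 4 0) * s^3
        + (-5 * (b 1 0 4 - a 1 1 3) + 9 * (b 1 2 2 - a 1 3 1) - 5 * b 1 4 0) * s^2
        + (4 * (b 1 0 4 - a 1 1 3) - 4 * (b 1 2 2 - a 1 3 1) - 12 * b 1 4 0) * s
        + (-3 * (b 1 0 4 - a 1 1 3) - (b 1 2 2 - a 1 3 1) - 3 * b 1 4 0)) / (4 * q^4 * u))"
    unfolding A_alg[OF d0 wp[THEN less_imp_neq, symmetric]]
    using B_alg2[OF s(1) u_def v_def vp q_def r_eq iw_eq e0c_def[of a b] e1c_def[of a b] e2c_def[of a b] e3c_def[of a b]] by (simp only: minus_divide_left)
  finally have fv: "f1 a b lam z = z * pi * (2 * lam 1 - (1/9) * (- (((-3 * (b 1 0 4 - a 1 1 3) - (b 1 2 2 - a 1 3 1) - 3 * b 1 4 0) * s^6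
        + (4 * (b 1 0 4 - a 1 1 3) - 4 * (b 1 2 2 - a 1 3 1) - 12 * b 1 4 0) * s^5
        + (-5 * (b 1 0 4 - a 1 1 3) + 9 * (b 1 2 2 - a 1 3 1) - 5 * b 1 4 0) * s^4
        + (8 * (b 1 0 4 - a 1 1 3) - 8 * (b 1 2 2 - a 1 3 1) + 40 * b 1 4 0) * s^3
        + (-5 * (b 1 0 4 - a 1 1 3) + 9 * (b 1 2 2 - a 1 3 1) - 5 * b 1 4 0) * s^2
        + (4 * (b 1 0 4 - a 1 1 3) - 4 * (b 1 2 2 - a 1 3 1) - 12 * b 1 4 0) * s
        + (-3 * (b 1 0 4 - a 1 1 3) - (b 1 2 2 - a 1 3 1) - 3 * b 1 4 0)) / (4 * q^4 * u))))" .
  have pf: "pi * 3 powr (2/3) * (1 - s) powr (1/3) / (108 * (1 + s) powr (11/3) * (1 + s^2) powr (4/3))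
     = pi * (3 * z / (108 * q^4 * u))"
  proof -
    have "pi * 3 powr (2/3) * (1 - s) powr (1/3) / (108 * (1 + s) powr (11/3) * (1 + s^2) powr (4/3))
      = pi * (3 powr (2/3) * (1 - s) powr (1/3) / (108 * (1 + s) powr (11/3) * (1 + s^2) powr (4/3)))"
      by (simp add: mult.assoc)
    also have "\<dots> = pi * (3 * z / (108 * q^4 * u))" unfolding powr_factor[OF s] z_def q_def u_def ..
    finally show ?thesis .
  qed
  show ?thesis unfolding Let_def pf z_def[symmetric] fv
    using up qp
    apply (simp add: field_simps)
    unfolding u_def q_def
    by algebra
qed

theorem mainTheorem7:
  fixes a b :: "nat \<Rightarrow> nat \<Rightarrow> nat \<Rightarrow> real" and lam :: "nat \<Rightarrow> real"
  shows "(\<forall>\<theta> r. r > 0 \<longrightarrow> F0 a b lam \<theta> r = r^4 * cos \<theta>)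
   \<and> (\<forall>z\<in>Dom. rsol z 0 = z \<and>
        (\<forall>\<theta>. (rsol z has_real_derivative F0 a b lam \<theta> (rsol z \<theta>)) (at \<theta>)
             \<and> rsol z \<theta> > 0 \<and> rsol z (\<theta> + 2*pi) = rsol z \<theta>))
   \<and> (\<forall>z\<in>Dom. Ysol z 0 = 1 \<and>
        (\<forall>\<theta>. (Ysol z has_real_derivative
               (deriv (\<lambda>\<rho>. F0 a b lam \<theta> \<rho>) (rsol z \<theta>) * Ysol z \<theta>)) (at \<theta>)))
   \<and> bij_betw zsub {0<..<1} Dom
   \<and> (\<forall>s\<in>{0<..<1::real}.
        let N1 = 3 * a 1 1 3 + a 1 3 1 - 3 * b 1 0 4 - b 1 2 2 - 3 * b 1 4 0 + 72 * lam 1;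
            N2 = -4 * a 1 1 3 + 4 * b 1 0 4 + 4 * a 1 3 1 - 4 * b 1 2 2 - 12 * b 1 4 0 + 288 * lam 1;
            N3 = 5 * a 1 1 3 - 9 * a 1 3 1 - 5 * b 1 0 4 + 9 * b 1 2 2 - 5 * b 1 4 0 + 504 * lam 1;
            N4 = -8 * a 1 1 3 + 8 * a 1 3 1 + 8 * b 1 0 4 - 8 * b 1 2 2 + 40 * b 1 4 0 + 576 * lam 1
        in f1 a b lam (zsub s) =
           pi * 3 powr (2/3) * (1 - s) powr (1/3)
             / (108 * (1 + s) powr (11/3) * (1 + s^2) powr (4/3))
           * (N1 * s^6 + N2 * s^5 + N3 * s^4 + N4 * s^3 + N3 * s^2 + N2 * s + N1))"
proof (intro conjI ballI allI impI)
  fix \<theta> r :: real assume "r > 0" then show "F0 a b lam \<theta> r = r^4 * cos \<theta>" by (rule F0_eq)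
next
  fix z assume "z \<in> Dom" then show "rsol z 0 = z" by (simp add: rsol_def)
next
  fix z \<theta> assume "z \<in> Dom" then show "(rsol z has_real_derivative F0 a b lam \<theta> (rsol z \<theta>)) (at \<theta>)"
    using rsol_props by blast
next
  fix z \<theta> assume "z \<in> Dom" then show "rsol z \<theta> > 0" using rsol_props by blast
next
  fix z \<theta> assume "z \<in> Dom" then show "rsol z (\<theta> + 2*pi) = rsol z \<theta>" using rsol_props by blast
next
  fix z assume "z \<in> Dom" then show "Ysol z 0 = 1" using Ysol_props by blast
next
  fix z \<theta> assume "z \<in> Dom" then show "(Ysol z has_real_derivative
               (deriv (\<lambda>\<rho>. F0 a b lam \<theta> \<rho>) (rsol z \<theta>) * Ysol z \<theta>)) (at \<theta>)"
    using Ysol_props by blast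
next
  show "bij_betw zsub {0<..<1} Dom" by (rule zsub_bij)
next
  fix s :: real assume "s \<in> {0<..<1}"
  then show "let N1 = 3 * a 1 1 3 + a 1 3 1 - 3 * b 1 0 4 - b 1 2 2 - 3 * b 1 4 0 + 72 * lam 1;
            N2 = -4 * a 1 1 3 + 4 * b 1 0 4 + 4 * a 1 3 1 - 4 * b 1 2 2 - 12 * b 1 4 0 + 288 * lam 1;
            N3 = 5 * a 1 1 3 - 9 * a 1 3 1 - 5 * b 1 0 4 + 9 * b 1 2 2 - 5 * b 1 4 0 + 504 * lam 1;
            N4 = -8 * a 1 1 3 + 8 * a 1 3 1 + 8 * b 1 0 4 - 8 * b 1 2 2 + 40 * b 1 4 0 + 576 * lam 1
        in f1 a b lam (zsub s) =
           pi * 3 powr (2/3) * (1 - s) powr (1/3)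
             / (108 * (1 + s) powr (11/3) * (1 + s^2) powr (4/3))
           * (N1 * s^6 + N2 * s^5 + N3 * s^4 + N4 * s^3 + N3 * s^2 + N2 * s + N1)"
    using f1_value[of s a b lam] by auto
qed

end
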